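(* Let $(M,\rho)$ be a complete metric space, let $f:M\to\mathbb{R}\cup\{+\infty\}$ be proper, lower semicontinuous and bounded below, and let $g:M\to\mathbb{R}$ be continuous with $$|\nabla f|(x)>|\nabla g|(x)\qquad\text{for all }x\in\operatorname{dom} f\setminus 0\operatorname{crit} f.$$ Then for every $\varepsilon>0$ and every $x_0\in\operatorname{dom} f$ there exists $x\in\varepsilon\operatorname{crit} f$ such that $$f(x)\le f(x_0)-\varepsilon\rho(x,x_0)\quad\text{and}\quad f(x_0)-g(x_0)\ge f(x)-g(x).$$ In particular, $f(y)-g(y)\ge\inf_{\varepsilon\operatorname{crit} f}(f-g)$ for all $y\in\operatorname{dom} f$ and all $\varepsilon>0$.
   Context: $\operatorname{dom} f:=\{x:f(x)<+\infty\}$. $[t]^+:=\max\{0,t\}$ (with $[f(x)-f(y)]^+:=0$ if $f(y)=+\infty$). For $x\in\operatorname{dom} f$, the local slope is $|\nabla f|(x):=\limsup_{y\to x,\,y\neq x}\frac{[f(x)-f(y)]^+}{\rho(x,y)}\in[0,+\infty]$ (equal to $0$ at isolated points). For $\varepsilon\ge0$, $\varepsilon\operatorname{crit} f:=\{x\in\operatorname{dom} f:\ |\nabla f|(x)\le\varepsilon\}$. *)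

theory Defs
  imports "HOL-Analysis.Analysis"
begin

text \<open>Extended-real-valued functions f :: 'a \<Rightarrow> ereal model f : M \<rightarrow> \<real> \<union> {+\<infinity>}.\<close>

definition edom :: "('a \<Rightarrow> ereal) \<Rightarrow> 'a set" where
  "edom f = {x. f x < \<infinity>}"

definition lsc :: "('a::topological_space \<Rightarrow> ereal) \<Rightarrow> bool" where
  "lsc f \<longleftrightarrow> (\<forall>x. f x \<le> Liminf (at x) f)"

text \<open>Local slope: limsup_{y \<rightarrow> x, y \<noteq> x} [f x - f y]^+ / dist x y, taken to be 0 at
  isolated points (the outer max with 0 only matters there, where the Limsup over the
  trivial filter is -\<infinity>). If f y = \<infinity> then f x - f y = -\<infinity> and the positive part is 0.\<close>
definition slope :: "('a::metric_space \<Rightarrow> ereal) \<Rightarrow> 'a \<Rightarrow> ereal" where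
  "slope f x = max 0 (Limsup (at x) (\<lambda>y. max 0 (f x - f y) / ereal (dist x y)))"

definition ecrit :: "real \<Rightarrow> ('a::metric_space \<Rightarrow> ereal) \<Rightarrow> 'a set" where
  "ecrit \<epsilon> f = {x \<in> edom f. slope f x \<le> ereal \<epsilon>}"

end

theory Submission
  imports Defs
begin


lemma ekeland_real:
  fixes F :: "'a::complete_space \<Rightarrow> real"
  assumes cl: "\<And>z. z \<in> D \<Longrightarrow> closed {y\<in>D. F y + e * dist y z \<le> F z}"
    and bd: "\<And>y. y \<in> D \<Longrightarrow> m \<le> F y"
    and e: "e > 0" and x0: "x0 \<in> D"
  shows "\<exists>x\<in>D. F x + e * dist x x0 \<le> F x0 \<and> (\<forall>y\<in>D. y \<noteq> x \<longrightarrow> F x < F y + e * dist x y)"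
proof -
  define T where "T z = {y\<in>D. F y + e * dist y z \<le> F z}" for z
  have zT: "z \<in> T z" if "z \<in> D" for z using that by (simp add: T_def)
  have trans: "w \<in> T z" if "y \<in> T z" "w \<in> T y" for y z w
  proof -
    have "dist w z \<le> dist w y + dist y z" by (rule dist_triangle)
    then have "e * dist w z \<le> e * dist w y + e * dist y z" using e
      by (metis distrib_left less_imp_le mult_left_mono)
    then show ?thesis using that unfolding T_def by simp
  qed
  define pick where "pick z n = (SOME y. y \<in> T z \<and> F y < Inf (F ` T z) + 1/2^n)" for z n
  have pick: "pick z n \<in> T z \<and> F (pick z n) < Inf (F ` T z) + 1/2^n" if "z \<in> D" for z n
  proof -
    have ne: "F ` T z \<noteq> {}" using zT[OF that] by auto
    have "Inf (F ` T z) < Inf (F ` T z) + 1/2^n" by simp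
    then obtain v where "v \<in> F ` T z" "v < Inf (F ` T z) + 1/2^n"
      using cInf_lessD[OF ne] by blast
    then have "\<exists>y. y \<in> T z \<and> F y < Inf (F ` T z) + 1/2^n" by auto
    then show ?thesis unfolding pick_def by (rule someI_ex)
  qed
  define xs where "xs = rec_nat x0 (\<lambda>n z. pick z n)"
  have xs0: "xs 0 = x0" and xsS: "xs (Suc n) = pick (xs n) n" for n by (simp_all add: xs_def)
  have TD: "T z \<subseteq> D" for z by (auto simp: T_def)
  have xsD: "xs n \<in> D" for n
    by (induction n) (use x0 pick TD xs0 xsS in auto)
  have bdd: "bdd_below (F ` T z)" for z using bd TD by (auto intro!: bdd_belowI)
  have sub: "T (xs n) \<subseteq> T (xs m)" if "m \<le> n" for m n
    using that
  proof (induction n)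
    case 0 then show ?case by simp
  next
    case (Suc n)
    show ?case
    proof (cases "m = Suc n")
      case False
      then have "T (xs n) \<subseteq> T (xs m)" using Suc by auto
      moreover have "T (xs (Suc n)) \<subseteq> T (xs n)"
        using pick[OF xsD[of n], of n] trans xsS by auto
      ultimately show ?thesis by blast
    qed simp
  qed
  have small: "e * dist y (xs (Suc n)) \<le> 1/2^n" if "y \<in> T (xs (Suc n))" for y n
  proof -
    have yT: "y \<in> T (xs n)" using sub[of n "Suc n"] that by auto
    have "Inf (F ` T (xs n)) \<le> F y" using yT bdd by (auto intro: cInf_lower)
    moreover have "F y + e * dist y (xs (Suc n)) \<le> F (xs (Suc n))" using that by (simp add: T_def)
    moreover have "F (xs (Suc n)) < Inf (F ` T (xs n)) + 1/2^n"
      using pick[OF xsD[of n], of n] xsS by auto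
    ultimately show ?thesis by linarith
  qed
  have diam: "\<exists>n. \<forall>x\<in>T (xs n). \<forall>y\<in>T (xs n). dist x y < \<epsilon>" if eps: "\<epsilon> > 0" for \<epsilon>
  proof -
    obtain n :: nat where n: "(1/2::real)^n < \<epsilon> * e / 2"
      using real_arch_pow_inv[of "\<epsilon> * e / 2" "1/2"] eps e by auto
    have "dist x y < \<epsilon>" if "x \<in> T (xs (Suc n))" "y \<in> T (xs (Suc n))" for x y
    proof -
      have "e * dist x (xs (Suc n)) \<le> 1/2^n" "e * dist y (xs (Suc n)) \<le> 1/2^n"
        using small that by auto
      then have "e * (dist x (xs (Suc n)) + dist y (xs (Suc n))) < \<epsilon> * e"
        using n by (simp add: power_one_over algebra_simps)
      then have "dist x (xs (Suc n)) + dist y (xs (Suc n)) < \<epsilon>" using e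
        by (simp add: mult.commute)
      moreover have "dist x y \<le> dist x (xs (Suc n)) + dist y (xs (Suc n))"
        by (rule dist_triangle2)
      ultimately show ?thesis by linarith
    qed
    then show ?thesis by blast
  qed
  have clT: "closed (T (xs n))" for n using cl[OF xsD] by (simp add: T_def)
  have neT: "T (xs n) \<noteq> {}" for n using zT[OF xsD] by auto
  obtain a where a: "\<Inter>(range (\<lambda>n. T (xs n))) = {a}"
    using decreasing_closed_nest_sing[of "\<lambda>n. T (xs n)", OF clT neT sub diam] by blast
  have aT: "a \<in> T (xs n)" for n using a by auto
  have aD: "a \<in> D" using aT[of 0] TD by auto
  have "a \<in> T x0" using aT[of 0] xs0 by simp
  then have p1: "F a + e * dist a x0 \<le> F x0" by (simp add: T_def)
  have p2: "F a < F y + e * dist a y" if "y \<in> D" "y \<noteq> a" for y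
  proof (rule ccontr)
    assume "\<not> ?thesis"
    then have "y \<in> T a" using that by (simp add: T_def dist_commute)
    then have "y \<in> T (xs n)" for n using trans aT by blast
    then have "y = a" using a by auto
    then show False using that by simp
  qed
  show ?thesis using aD p1 p2 by blast
qed

lemma closed_lsc_le:
  fixes f :: "'a::metric_space \<Rightarrow> ereal" and h :: "'a \<Rightarrow> real"
  assumes "lsc f" "continuous_on UNIV h"
  shows "closed {y. f y \<le> ereal (h y)}"
proof -
  have "open {y. \<not> f y \<le> ereal (h y)}"
  proof (subst open_subopen, intro ballI)
    fix y assume "y \<in> {y. \<not> f y \<le> ereal (h y)}"
    then have "ereal (h y) < f y" by auto
    then obtain r where r1: "ereal (h y) < ereal r" and r2: "ereal r < f y"
      using ereal_dense2 by blast
    have "ereal r < Liminf (at y) f" using r2 assms(1) unfolding lsc_def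
      using order_less_le_trans by blast
    then have ev1: "eventually (\<lambda>z. ereal r < f z) (at y)" by (rule less_LiminfD)
    have "isCont h y" using assms(2) by (simp add: continuous_on_eq_continuous_at)
    then have "(h \<longlongrightarrow> h y) (at y)" by (simp add: isCont_def)
    then have ev2: "eventually (\<lambda>z. h z < r) (at y)" using r1 order_tendstoD(2) by auto
    have "eventually (\<lambda>z. \<not> f z \<le> ereal (h z)) (at y)"
      using eventually_conj[OF ev1 ev2]
    proof eventually_elim
      case (elim z)
      then have "ereal (h z) \<le> ereal r" by simp
      then show ?case using elim by (meson leD order_trans)
    qed
    then obtain S where S: "open S" "y \<in> S" "\<forall>z\<in>S. z \<noteq> y \<longrightarrow> \<not> f z \<le> ereal (h z)"
      unfolding eventually_at_topological by auto
    show "\<exists>T. open T \<and> y \<in> T \<and> T \<subseteq> {y. \<not> f y \<le> ereal (h y)}"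
      using S \<open>ereal (h y) < f y\<close> by (intro exI[of _ S]) auto
  qed
  then show ?thesis by (simp add: closed_def Compl_eq)
qed

lemma part1:
  fixes f :: "'a::complete_space \<Rightarrow> ereal" and g :: "'a \<Rightarrow> real"
  assumes proper: "\<forall>x. f x \<noteq> -\<infinity>"
    and lsc_f: "lsc f"
    and bdd: "\<exists>m::real. \<forall>x. ereal m \<le> f x"
    and cont_g: "continuous_on UNIV g"
    and slope_gt: "\<forall>x \<in> edom f - ecrit 0 f. slope f x > slope (\<lambda>y. ereal (g y)) x"
    and eps: "\<epsilon> > 0" and x0: "x0 \<in> edom f"
  shows "\<exists>x \<in> ecrit \<epsilon> f.
            f x \<le> f x0 - ereal (\<epsilon> * dist x x0) \<and>
            f x0 - ereal (g x0) \<ge> f x - ereal (g x)"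
proof -
  obtain m :: real where m: "\<And>x. ereal m \<le> f x" using bdd by blast
  define F where "F y = real_of_ereal (f y)" for y
  have fin: "f y = ereal (F y)" if "f y < \<infinity>" for y
    using that proper unfolding F_def by (cases "f y") auto
  have x0f: "f x0 = ereal (F x0)" using x0 fin by (simp add: edom_def)
  define c where "c = F x0 - g x0"
  define D where "D = {y. f y \<le> ereal (c + g y)}"
  have Dfin: "f y = ereal (F y)" if "y \<in> D" for y
    using that fin proper unfolding D_def F_def by (cases "f y") auto
  have DF: "y \<in> D \<longleftrightarrow> f y < \<infinity> \<and> F y \<le> c + g y" for y
    using Dfin fin proper unfolding D_def F_def by (cases "f y") auto
  have cl: "closed {y\<in>D. F y + \<epsilon> * dist y z \<le> F z}" for z
  proof -
    have "{y\<in>D. F y + \<epsilon> * dist y z \<le> F z} = D \<inter> {y. f y \<le> ereal (F z - \<epsilon> * dist y z)}"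
      using Dfin by auto
    moreover have "closed D" unfolding D_def
      by (rule closed_lsc_le[OF lsc_f]) (intro continuous_intros cont_g)
    moreover have "closed {y. f y \<le> ereal (F z - \<epsilon> * dist y z)}"
      by (rule closed_lsc_le[OF lsc_f]) (intro continuous_intros)
    ultimately show ?thesis by auto
  qed
  have bdF: "m \<le> F y" if "y \<in> D" for y using m[of y] Dfin[OF that] by simp
  have x0D: "x0 \<in> D" using x0 x0f by (simp add: DF edom_def c_def)
  obtain x where xD: "x \<in> D" and p1: "F x + \<epsilon> * dist x x0 \<le> F x0"
    and p2: "\<forall>y\<in>D. y \<noteq> x \<longrightarrow> F x < F y + \<epsilon> * dist x y"
    using ekeland_real[of D F \<epsilon> m x0, OF _ bdF eps x0D] cl by blast
  have xf: "f x = ereal (F x)" using Dfin xD by blast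
  have xdom: "x \<in> edom f" using xf by (simp add: edom_def)
  have slope_le: "slope f x \<le> ereal \<epsilon>"
  proof (rule ccontr)
    assume "\<not> ?thesis"
    then have sl: "ereal \<epsilon> < slope f x" by simp
    have "ereal 0 < ereal \<epsilon>" using eps by simp
    then have "ereal 0 < slope f x" using sl by (rule order.strict_trans)
    then have "x \<notin> ecrit 0 f" by (auto simp: ecrit_def)
    then have sg: "slope (\<lambda>y. ereal (g y)) x < slope f x" using slope_gt xdom by blast
    obtain c' where c1: "max (ereal \<epsilon>) (slope (\<lambda>y. ereal (g y)) x) < ereal c'"
      and c2: "ereal c' < slope f x"
      using ereal_dense2[of "max (ereal \<epsilon>) (slope (\<lambda>y. ereal (g y)) x)"] sl sg by auto
    have c'eps: "\<epsilon> < c'" using c1 by simp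
    have "Limsup (at x) (\<lambda>y. max 0 (ereal (g x) - ereal (g y)) / ereal (dist x y)) < ereal c'"
      using c1 unfolding slope_def by simp
    then have evg: "eventually (\<lambda>y. max 0 (ereal (g x) - ereal (g y)) / ereal (dist x y) < ereal c') (at x)"
      by (rule Limsup_lessD)
    have evg2: "eventually (\<lambda>y. y \<noteq> x \<and> g x - g y \<le> c' * dist x y) (at x)"
      using evg eventually_at_filter[of "\<lambda>y. y\<noteq>x" x UNIV]
    proof -
      have "eventually (\<lambda>y. y \<noteq> x) (at x)" by (simp add: eventually_at_filter)
      then show ?thesis using evg
      proof eventually_elim
        case (elim y)
        then have d: "dist x y > 0" by simp
        have "ereal (max 0 (g x - g y) / dist x y) < ereal c'"
          using elim d by (simp add: max_def split: if_splits)
        then have "max 0 (g x - g y) / dist x y < c'" by simp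
        then have "max 0 (g x - g y) < c' * dist x y" using d by (simp add: divide_less_eq)
        then show ?case using elim by simp
      qed
    qed
    have "\<exists>y. y \<noteq> x \<and> g x - g y \<le> c' * dist x y \<and>
            ereal c' < max 0 (f x - f y) / ereal (dist x y)"
    proof (rule ccontr)
      assume H: "\<not> ?thesis"
      have "eventually (\<lambda>y. max 0 (f x - f y) / ereal (dist x y) \<le> ereal c') (at x)"
        using evg2 by eventually_elim (use H in auto)
      then have "Limsup (at x) (\<lambda>y. max 0 (f x - f y) / ereal (dist x y)) \<le> ereal c'"
        by (rule Limsup_bounded)
      then have "slope f x \<le> ereal c'" unfolding slope_def using c'eps eps by simp
      then show False using c2 by simp
    qed
    then obtain y where yx: "y \<noteq> x" and gy: "g x - g y \<le> c' * dist x y"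
      and fy: "ereal c' < max 0 (f x - f y) / ereal (dist x y)" by blast
    have d: "dist x y > 0" using yx by simp
    have yfin: "f y < \<infinity>"
    proof (rule ccontr)
      assume "\<not> f y < \<infinity>"
      then have "f y = \<infinity>" by simp
      then show False using fy xf c'eps eps d by simp
    qed
    have yf: "f y = ereal (F y)" using fin yfin by blast
    have "c' < max 0 (F x - F y) / dist x y" using fy xf yf d by (simp add: max_def split: if_splits)
    then have "c' * dist x y < max 0 (F x - F y)" using d by (simp add: less_divide_eq)
    moreover have "0 < c' * dist x y" using c'eps eps d by simp
    ultimately have key: "c' * dist x y < F x - F y" by simp
    have "\<epsilon> * dist x y \<le> c' * dist x y" using c'eps d by simp
    have "F x \<le> c + g x" using xD DF by blast
    then have "y \<in> D" using key gy yfin DF by auto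
    then have "F x < F y + \<epsilon> * dist x y" using p2 yx by blast
    then show False using key \<open>\<epsilon> * dist x y \<le> c' * dist x y\<close> by simp
  qed
  have xcrit: "x \<in> ecrit \<epsilon> f" using xdom slope_le by (simp add: ecrit_def)
  have q1: "f x \<le> f x0 - ereal (\<epsilon> * dist x x0)" using p1 xf x0f by simp
  have "F x \<le> c + g x" using xD DF by blast
  then have q2: "f x0 - ereal (g x0) \<ge> f x - ereal (g x)" using xf x0f by (simp add: c_def)
  show ?thesis using xcrit q1 q2 by blast
qed


theorem proposition3p4:
  fixes f :: "'a::complete_space \<Rightarrow> ereal" and g :: "'a \<Rightarrow> real"
  assumes proper: "edom f \<noteq> {}" "\<forall>x. f x \<noteq> -\<infinity>"
    and lsc_f: "lsc f"
    and bdd: "\<exists>m::real. \<forall>x. ereal m \<le> f x"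
    and cont_g: "continuous_on UNIV g"
    and slope_gt: "\<forall>x \<in> edom f - ecrit 0 f. slope f x > slope (\<lambda>y. ereal (g y)) x"
  shows "(\<forall>\<epsilon>>0. \<forall>x0 \<in> edom f. \<exists>x \<in> ecrit \<epsilon> f.
            f x \<le> f x0 - ereal (\<epsilon> * dist x x0) \<and>
            f x0 - ereal (g x0) \<ge> f x - ereal (g x))
       \<and> (\<forall>y \<in> edom f. \<forall>\<epsilon>>0. f y - ereal (g y) \<ge> (INF x \<in> ecrit \<epsilon> f. f x - ereal (g x)))"
proof (intro conjI allI impI ballI)
  fix \<epsilon> :: real and x0 assume "\<epsilon> > 0" "x0 \<in> edom f"
  then show "\<exists>x \<in> ecrit \<epsilon> f. f x \<le> f x0 - ereal (\<epsilon> * dist x x0) \<and>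
            f x0 - ereal (g x0) \<ge> f x - ereal (g x)"
    using part1[OF proper(2) lsc_f bdd cont_g slope_gt] by blast
next
  fix y and \<epsilon> :: real assume y: "y \<in> edom f" and e: "\<epsilon> > 0"
  obtain x where x: "x \<in> ecrit \<epsilon> f" "f y - ereal (g y) \<ge> f x - ereal (g x)"
    using part1[OF proper(2) lsc_f bdd cont_g slope_gt e y] by blast
  show "f y - ereal (g y) \<ge> (INF x \<in> ecrit \<epsilon> f. f x - ereal (g x))"
    using x by (meson INF_lower2)
qed

end
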